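(* Let $A\in\mathbb{R}^{n\times n}$ and $B_u\in\mathbb{R}^{n\times l}$ be given, and let data samples $d_i=\begin{bmatrix}\hat x_i^\top & u_i^\top & \hat\eta_i^\top\end{bmatrix}^\top$, $i=1,\dots,N$, with $\hat x_i\in\mathbb{R}^n$, $u_i\in\mathbb{R}^l$, $\hat\eta_i\in\mathbb{R}^n$, be given. Let $D=\sum_{i=1}^N d_id_i^\top$ and let $\tilde D$ be a matrix with $D=\tilde D^\top\tilde D$ (e.g. a Cholesky factor). Consider the semidefinite program in the variables $P=P^\top\in\mathbb{R}^{n\times n}$, $S\in\mathbb{R}^{n\times n}$, $R\in\mathbb{R}^{n\times l}$, $W=W^\top\in\mathbb{R}^{n\times n}$: $$\min_{P,S,R,W}\ \operatorname{tr}(W)\quad\text{s.t.}\quad A^\top P+PA+S^\top+S\prec 0,\qquad \begin{bmatrix}2P & \tilde T\tilde D^\top & I\\ \star & I & 0\\ \star & \star & W\end{bmatrix}\succeq 0,\qquad P\succ 0,$$ where $\tilde T:=\begin{bmatrix} S & R & -P\end{bmatrix}$ and $\star$ denotes the blocks determined by symmetry. Let $(P^\star,S^\star,R^\star,W^\star)$ be an optimizer of this program. Set $S_{\eta_l}=I_n$, $\Theta_l=\Theta_l^\star:=(P^\star)^{-1}S^\star$ and $B_l=B_l^\star:=(P^\star)^{-1}R^\star$. Then the model $$\dot x=Ax+B_uu+S_{\eta_l}(\Theta_l x+B_l u)$$ is asymptotically stable (for $u=0$), i.e. $A+S_{\eta_l}\Theta_l^\star$ is Hurwitz, with $V(x)=x^\top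 P^\star x$ a Lyapunov function satisfying $(A+\Theta_l^\star)^\top P^\star+P^\star(A+\Theta_l^\star)\prec 0$. Moreover, the cost $$J=\sum_{i=1}^N e_i^\top e_i,\qquad e_i:=\Theta_l^\star\hat x_i+B_l^\star u_i-\hat\eta_i,$$ satisfies $J\le \operatorname{tr}(W^\star)$.
   Context: Setting: one seeks a linear uncertainty model $\eta_l(x,u)=\Theta_lx+B_lu$ to augment the known linear model $\dot x=Ax+B_uu$ as $\dot x=Ax+B_uu+S_{\eta_l}\eta_l(x,u)$, fitted to data $(\hat x_i,u_i,\hat\eta_i)$ (estimates of state, input, and uncertainty) by the quadratic cost $J=\sum_i e_i^\top e_i=\sum_i d_i^\top T^\top T d_i$ with $T=[\Theta_l\ \ B_l\ \ -I]$ and $e_i=Td_i$. Note $J=\operatorname{tr}(TDT^\top)$. A matrix is Hurwitz if all its eigenvalues have negative real part. *)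

theory Defs
  imports "HOL-Analysis.Analysis"
begin

definition sym_mat :: "real^'n^'n \<Rightarrow> bool" where
  "sym_mat M \<longleftrightarrow> transpose M = M"

definition pos_def :: "real^'n^'n \<Rightarrow> bool" where
  "pos_def M \<longleftrightarrow> sym_mat M \<and> (\<forall>x. x \<noteq> 0 \<longrightarrow> x \<bullet> (M *v x) > 0)"

definition neg_def :: "real^'n^'n \<Rightarrow> bool" where
  "neg_def M \<longleftrightarrow> sym_mat M \<and> (\<forall>x. x \<noteq> 0 \<longrightarrow> x \<bullet> (M *v x) < 0)"

definition pos_semidef :: "real^'n^'n \<Rightarrow> bool" where
  "pos_semidef M \<longleftrightarrow> sym_mat M \<and> (\<forall>x. x \<bullet> (M *v x) \<ge> 0)"

definition hurwitz :: "real^'n^'n \<Rightarrow> bool" where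
  "hurwitz M \<longleftrightarrow> (\<forall>z::complex. det (mat z - map_matrix complex_of_real M) = 0 \<longrightarrow> Re z < 0)"

definition outer_prod :: "real^'m \<Rightarrow> real^'n \<Rightarrow> real^'n^'m" where
  "outer_prod x y = (\<chi> i j. x $ i * y $ j)"

definition stack3 :: "real^'n \<Rightarrow> real^'l \<Rightarrow> real^'n \<Rightarrow> real^('n + ('l + 'n))" where
  "stack3 x u e = (\<chi> j. case j of Inl a \<Rightarrow> x $ a | Inr (Inl b) \<Rightarrow> u $ b | Inr (Inr c) \<Rightarrow> e $ c)"

definition hblock3 :: "real^'n^'m \<Rightarrow> real^'l^'m \<Rightarrow> real^'n^'m \<Rightarrow> real^('n + ('l + 'n))^'m" where
  "hblock3 X Y Z = (\<chi> i j. case j of Inl a \<Rightarrow> X $ i $ a | Inr (Inl b) \<Rightarrow> Y $ i $ b | Inr (Inr c) \<Rightarrow> Z $ i $ c)"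

definition symblock3 ::
  "real^'a^'a \<Rightarrow> real^'b^'a \<Rightarrow> real^'c^'a \<Rightarrow> real^'b^'b \<Rightarrow> real^'c^'b \<Rightarrow> real^'c^'c
   \<Rightarrow> real^('a + ('b + 'c))^('a + ('b + 'c))" where
  "symblock3 M11 M12 M13 M22 M23 M33 = (\<chi> i j.
     case i of
       Inl p \<Rightarrow> (case j of Inl q \<Rightarrow> M11 $ p $ q | Inr (Inl q) \<Rightarrow> M12 $ p $ q | Inr (Inr q) \<Rightarrow> M13 $ p $ q)
     | Inr (Inl p) \<Rightarrow> (case j of Inl q \<Rightarrow> M12 $ q $ p | Inr (Inl q) \<Rightarrow> M22 $ p $ q | Inr (Inr q) \<Rightarrow> M23 $ p $ q)
     | Inr (Inr p) \<Rightarrow> (case j of Inl q \<Rightarrow> M13 $ q $ p | Inr (Inl q) \<Rightarrow> M23 $ q $ p | Inr (Inr q) \<Rightarrow> M33 $ p $ q))"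

definition sdp_feasible ::
  "real^'n^'n \<Rightarrow> real^('n + ('l + 'n))^'k \<Rightarrow> real^'n^'n \<Rightarrow> real^'n^'n \<Rightarrow> real^'l^'n \<Rightarrow> real^'n^'n \<Rightarrow> bool" where
  "sdp_feasible A Dt P S R W \<longleftrightarrow>
     sym_mat P \<and> sym_mat W \<and>
     neg_def (transpose A ** P + P ** A + transpose S + S) \<and>
     pos_semidef (symblock3 (2 *\<^sub>R P) (hblock3 S R (- P) ** transpose Dt) (mat 1)
                            (mat 1) 0 W) \<and>
     pos_def P"

definition sdp_optimal ::
  "real^'n^'n \<Rightarrow> real^('n + ('l + 'n))^'k \<Rightarrow> real^'n^'n \<Rightarrow> real^'n^'n \<Rightarrow> real^'l^'n \<Rightarrow> real^'n^'n \<Rightarrow> bool" where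
  "sdp_optimal A Dt P S R W \<longleftrightarrow> sdp_feasible A Dt P S R W \<and>
     (\<forall>P' S' R' W'. sdp_feasible A Dt P' S' R' W' \<longrightarrow> trace W \<le> trace W')"

end

theory Submission imports Defs begin

lemma dot_mv: "(x::real^'n) \<bullet> (M *v y) = (transpose M *v x) \<bullet> y"
  by (metis dot_lmul_matrix transpose_matrix_vector)

lemma pd_invertible:
  fixes P :: "real^'n^'n" assumes "pos_def P" shows "invertible P"
proof -
  have "\<forall>x. P *v x = 0 \<longrightarrow> x = 0"
    using assms unfolding pos_def_def by (metis inner_zero_right less_irrefl)
  then show ?thesis using matrix_left_invertible_ker invertible_left_inverse by blast
qed

lemma inv_props:
  fixes P :: "real^'n^'n" assumes "invertible P"
  shows "P ** matrix_inv P = mat 1" "matrix_inv P ** P = mat 1"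
  using assms unfolding invertible_def matrix_inv_def by (metis (mono_tags, lifting) someI_ex)+

lemma inv_sym:
  fixes P :: "real^'n^'n" assumes "invertible P" "transpose P = P"
  shows "transpose (matrix_inv P) = matrix_inv P"
proof -
  have "transpose (matrix_inv P) ** P = mat 1"
    using inv_props(1)[OF assms(1)] by (metis assms(2) matrix_transpose_mul transpose_mat)
  then have "transpose (matrix_inv P) ** P ** matrix_inv P = matrix_inv P" by simp
  then show ?thesis using inv_props(1)[OF assms(1)]
    by (metis matrix_mul_assoc matrix_mul_rid)
qed

lemma quad_lyap:
  fixes P M :: "real^'n^'n" assumes "transpose P = P"
  shows "x \<bullet> ((transpose M ** P + P ** M) *v x) = 2 * ((P *v x) \<bullet> (M *v x))"
proof -
  have "x \<bullet> ((transpose M ** P) *v x) = (M *v x) \<bullet> (P *v x)"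
    by (metis dot_mv matrix_vector_mul_assoc transpose_transpose)
  moreover have "x \<bullet> ((P ** M) *v x) = (P *v x) \<bullet> (M *v x)"
    by (metis dot_mv matrix_vector_mul_assoc assms)
  ultimately show ?thesis
    by (simp add: matrix_vector_mult_add_rdistrib inner_add_right inner_commute)
qed


lemma hurwitz_lyap:
  fixes P M :: "real^'n^'n"
  assumes "pos_def P" "neg_def (transpose M ** P + P ** M)"
  shows "hurwitz M"
  unfolding hurwitz_def
proof (intro allI impI)
  fix z :: complex
  assume "det (mat z - map_matrix complex_of_real M) = 0"
  then have "\<not> invertible (mat z - map_matrix complex_of_real M)"
    using invertible_det_nz by blast
  then obtain v where v0: "v \<noteq> 0" and vz: "(mat z - map_matrix complex_of_real M) *v v = 0"
    using matrix_left_invertible_ker invertible_left_inverse by blast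
  define a where "a = (\<chi> i. Re (v $ i))"
  define b where "b = (\<chi> i. Im (v $ i))"
  define \<alpha> where "\<alpha> = Re z"
  define \<beta> where "\<beta> = Im z"
  have comp: "z * v $ i = (\<Sum>j\<in>UNIV. complex_of_real (M $ i $ j) * v $ j)" for i
  proof -
    have "((mat z - map_matrix complex_of_real M) *v v) $ i = 0" using vz by simp
    then show ?thesis
      by (simp add: matrix_vector_mult_def map_matrix_def mat_def sum_subtractf
          left_diff_distrib if_distrib[of "\<lambda>x. x * _"] cong: if_cong)
  qed
  have Ma: "M *v a = \<alpha> *\<^sub>R a - \<beta> *\<^sub>R b"
  proof (subst vec_eq_iff, intro allI)
    fix i
    have "Re (z * v $ i) = Re (\<Sum>j\<in>UNIV. complex_of_real (M $ i $ j) * v $ j)" using comp by simp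
    then show "(M *v a) $ i = (\<alpha> *\<^sub>R a - \<beta> *\<^sub>R b) $ i"
      by (simp add: a_def b_def \<alpha>_def \<beta>_def matrix_vector_mult_def Re_sum)
  qed
  have Mb: "M *v b = \<beta> *\<^sub>R a + \<alpha> *\<^sub>R b"
  proof (subst vec_eq_iff, intro allI)
    fix i
    have "Im (z * v $ i) = Im (\<Sum>j\<in>UNIV. complex_of_real (M $ i $ j) * v $ j)" using comp by simp
    then show "(M *v b) $ i = (\<beta> *\<^sub>R a + \<alpha> *\<^sub>R b) $ i"
      by (simp add: a_def b_def \<alpha>_def \<beta>_def matrix_vector_mult_def Im_sum algebra_simps)
  qed
  have ab: "a \<noteq> 0 \<or> b \<noteq> 0"
  proof (rule ccontr)
    assume "\<not> (a \<noteq> 0 \<or> b \<noteq> 0)"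
    then have "v $ i = 0" for i
      by (metis a_def b_def complex_eqI vec_lambda_beta zero_complex.simps zero_index)
    then show False using v0 by (simp add: vec_eq_iff)
  qed
  have Ps: "transpose P = P" using assms(1) by (simp add: pos_def_def sym_mat_def)
  let ?L = "transpose M ** P + P ** M"
  have neg: "x \<bullet> (?L *v x) \<le> 0" for x
    using assms(2) unfolding neg_def_def by (cases "x = 0") (auto intro: less_imp_le)
  have sneg: "a \<bullet> (?L *v a) + b \<bullet> (?L *v b) < 0"
  proof (cases "a = 0")
    case True
    then have "b \<noteq> 0" using ab by simp
    then have "b \<bullet> (?L *v b) < 0" using assms(2) unfolding neg_def_def by blast
    then show ?thesis using neg[of a] by linarith
  next
    case False
    then have "a \<bullet> (?L *v a) < 0" using assms(2) unfolding neg_def_def by blast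
    then show ?thesis using neg[of b] by linarith
  qed
  have pab: "(P *v b) \<bullet> a = (P *v a) \<bullet> b"
    by (metis Ps dot_mv inner_commute)
  have "a \<bullet> (?L *v a) + b \<bullet> (?L *v b) = 2 * \<alpha> * (a \<bullet> (P *v a) + b \<bullet> (P *v b))"
    unfolding quad_lyap[OF Ps] Ma Mb
    using pab by (simp add: inner_diff_right inner_add_right inner_commute algebra_simps)
  moreover have "a \<bullet> (P *v a) + b \<bullet> (P *v b) > 0"
  proof -
    have pn: "x \<bullet> (P *v x) \<ge> 0" for x
      using assms(1) unfolding pos_def_def by (cases "x = 0") (auto intro: less_imp_le)
    show ?thesis
    proof (cases "a = 0")
      case True
      then have "b \<noteq> 0" using ab by simp
      then have "b \<bullet> (P *v b) > 0" using assms(1) unfolding pos_def_def by blast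
      then show ?thesis using pn[of a] by linarith
    next
      case False
      then have "a \<bullet> (P *v a) > 0" using assms(1) unfolding pos_def_def by blast
      then show ?thesis using pn[of b] by linarith
    qed
  qed
  ultimately show "Re z < 0" using sneg unfolding \<alpha>_def
    by (smt (verit) mult_nonneg_nonneg)
qed


definition stk :: "real^'a \<Rightarrow> real^'b \<Rightarrow> real^'c \<Rightarrow> real^('a + ('b + 'c))" where
  "stk x u e = (\<chi> j. case j of Inl a \<Rightarrow> x $ a | Inr (Inl b) \<Rightarrow> u $ b | Inr (Inr c) \<Rightarrow> e $ c)"

lemma sum_plus_UNIV: "sum f (UNIV :: ('a::finite + 'b::finite) set) = sum (f \<circ> Inl) UNIV + sum (f \<circ> Inr) UNIV"
  by (metis UNIV_Plus_UNIV finite_class.finite_UNIV sum.Plus)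

lemma mv_stk: "(symblock3 M11 M12 M13 M22 M23 M33 *v stk a b e) =
   stk (M11 *v a + M12 *v b + M13 *v e) (transpose M12 *v a + M22 *v b + M23 *v e)
       (transpose M13 *v a + transpose M23 *v b + M33 *v e)"
  by (auto simp: vec_eq_iff stk_def symblock3_def matrix_vector_mult_def sum_plus_UNIV transpose_def
      split: sum.split)

lemma inner_stk: "stk a b e \<bullet> stk a' b' e' = a \<bullet> a' + b \<bullet> b' + e \<bullet> e'"
  by (simp add: inner_vec_def stk_def sum_plus_UNIV o_def)

lemma vm_dot: "(y::real^'n) \<bullet> (x v* A) = x \<bullet> (A *v y)"
  by (metis dot_lmul_matrix inner_commute)

lemma quad_block:
  fixes M11 :: "real^'a^'a"
  shows "stk a b e \<bullet> (symblock3 M11 M12 M13 M22 M23 M33 *v stk a b e) =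
    a \<bullet> (M11 *v a) + 2 * (a \<bullet> (M12 *v b)) + 2 * (a \<bullet> (M13 *v e)) + b \<bullet> (M22 *v b)
    + 2 * (b \<bullet> (M23 *v e)) + e \<bullet> (M33 *v e)"
  unfolding mv_stk inner_stk
  by (simp add: inner_add_right vm_dot)


lemma stack3_stk: "stack3 x u e = stk x u e"
  by (simp add: stack3_def stk_def)

lemma hblock_mv: "hblock3 X Y Z *v stk a b c = X *v a + Y *v b + Z *v c"
  by (simp add: vec_eq_iff hblock3_def stk_def matrix_vector_mult_def sum_plus_UNIV)

lemma sum_mat_mv: "(sum f A) *v (y::real^'n) = sum (\<lambda>i. f i *v y) A"
  by (induct A rule: infinite_finite_induct) (simp_all add: matrix_vector_mult_add_rdistrib)

lemma outer_mv: "outer_prod d d *v y = (d \<bullet> y) *\<^sub>R d"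
  by (simp add: vec_eq_iff outer_prod_def matrix_vector_mult_def inner_vec_def sum_distrib_left mult.commute mult.left_commute)

lemma diag_axis: "axis j 1 \<bullet> (W *v axis j (1::real)) = W $ j $ j"
  by (simp add: inner_axis' matrix_vector_mul_component inner_axis)

lemma mv_neg: "A *v (- x) = - (A *v (x::real^'n))"
  by (simp add: vec_eq_iff matrix_vector_mult_def sum_negf)

lemma neg_mv: "(- A) *v x = - (A *v (x::real^'n))"
  by (simp add: vec_eq_iff matrix_vector_mult_def sum_negf)

lemma key_ineq:
  fixes P W :: "real^'n^'n" and C :: "real^'k^'n"
  assumes pd: "pos_def P"
    and psd: "pos_semidef (symblock3 (2 *\<^sub>R P) C (mat 1) (mat 1) 0 W)"
  shows "(transpose C *v (matrix_inv P *v e)) \<bullet> (transpose C *v (matrix_inv P *v e)) \<le> e \<bullet> (W *v e)"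
proof -
  let ?Q = "matrix_inv P"
  have inv: "invertible P" using pd_invertible[OF pd] .
  have Ps: "transpose P = P" using pd by (simp add: pos_def_def sym_mat_def)
  have PQ: "P *v (?Q *v x) = x" for x
    using inv_props(1)[OF inv] by (metis matrix_vector_mul_assoc matrix_vector_mul_lid)
  define a where "a = - (?Q *v e)"
  define b where "b = transpose C *v (?Q *v e)"
  have "0 \<le> stk a b e \<bullet> (symblock3 (2 *\<^sub>R P) C (mat 1) (mat 1) 0 W *v stk a b e)"
    using psd unfolding pos_semidef_def by blast
  also have "\<dots> = a \<bullet> ((2 *\<^sub>R P) *v a) + 2 * (a \<bullet> (C *v b)) + 2 * (a \<bullet> e) + b \<bullet> b + e \<bullet> (W *v e)"
    unfolding quad_block by simp
  also have "a \<bullet> ((2 *\<^sub>R P) *v a) = 2 * ((?Q *v e) \<bullet> e)"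
    unfolding a_def by (simp add: scaleR_matrix_vector_assoc PQ mv_neg scaleR_matrix_vector_assoc[symmetric])
  also have "a \<bullet> (C *v b) = - (b \<bullet> b)"
    unfolding a_def inner_minus_left dot_mv[of "?Q *v e" C] b_def by (rule refl)
  also have "a \<bullet> e = - ((?Q *v e) \<bullet> e)" unfolding a_def by simp
  finally show ?thesis unfolding b_def by simp
qed


lemma transpose_add': "transpose (A + B) = transpose A + transpose (B::real^'n^'m)"
  by (simp add: vec_eq_iff transpose_def)

lemma matrix_add_rdistrib': "(A + B) ** C = A ** C + B ** (C::real^'k^'n)"
  by (simp add: vec_eq_iff matrix_matrix_mult_def sum.distrib distrib_right)

theorem theorem1:
  fixes A :: "real^'n^'n" and Bu :: "real^'l^'n"
    and xh :: "nat \<Rightarrow> real^'n" and u :: "nat \<Rightarrow> real^'l" and eh :: "nat \<Rightarrow> real^'n"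
    and N :: nat
    and Dt :: "real^('n + ('l + 'n))^'k"
    and P S W :: "real^'n^'n" and R :: "real^'l^'n"
  assumes "(\<Sum>i=1..N. outer_prod (stack3 (xh i) (u i) (eh i)) (stack3 (xh i) (u i) (eh i)))
             = transpose Dt ** Dt"
    and "sdp_optimal A Dt P S R W"
  shows "hurwitz (A + mat 1 ** (matrix_inv P ** S))
       \<and> pos_def P
       \<and> neg_def (transpose (A + matrix_inv P ** S) ** P + P ** (A + matrix_inv P ** S))
       \<and> (\<Sum>i=1..N. let e = (matrix_inv P ** S) *v xh i + (matrix_inv P ** R) *v u i - eh i
                     in e \<bullet> e) \<le> trace W"
proof -
  let ?Q = "matrix_inv P"
  have feas: "sdp_feasible A Dt P S R W" using assms(2) unfolding sdp_optimal_def by blast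
  have pd: "pos_def P" using feas unfolding sdp_feasible_def by blast
  have nd: "neg_def (transpose A ** P + P ** A + transpose S + S)"
    using feas unfolding sdp_feasible_def by blast
  have psd: "pos_semidef (symblock3 (2 *\<^sub>R P) (hblock3 S R (- P) ** transpose Dt) (mat 1) (mat 1) 0 W)"
    using feas unfolding sdp_feasible_def by blast
  have inv: "invertible P" using pd_invertible[OF pd] .
  have Ps: "transpose P = P" using pd by (simp add: pos_def_def sym_mat_def)
  have Qs: "transpose ?Q = ?Q" using inv_sym[OF inv Ps] .
  have PQ: "P ** ?Q = mat 1" and QP: "?Q ** P = mat 1" using inv_props[OF inv] by auto
  have lyap: "transpose (A + ?Q ** S) ** P + P ** (A + ?Q ** S) = transpose A ** P + P ** A + transpose S + S"
  proof -
    have "transpose (?Q ** S) ** P = transpose S"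
      by (metis Qs QP matrix_mul_assoc matrix_mul_rid matrix_transpose_mul Ps PQ)
    moreover have "P ** (?Q ** S) = S" by (metis PQ matrix_mul_assoc matrix_mul_lid)
    ultimately show ?thesis
      by (simp add: transpose_add' matrix_add_rdistrib' matrix_add_ldistrib algebra_simps)
  qed
  have nd2: "neg_def (transpose (A + ?Q ** S) ** P + P ** (A + ?Q ** S))"
    using nd lyap by simp
  have hur: "hurwitz (A + mat 1 ** (?Q ** S))"
    using hurwitz_lyap[OF pd nd2] by simp
  let ?T = "hblock3 S R (- P)"
  let ?C = "?T ** transpose Dt"
  define d where "d i = stk (xh i) (u i) (eh i)" for i
  define E where "E i = (?Q ** S) *v xh i + (?Q ** R) *v u i - eh i" for i
  have D: "(\<Sum>i=1..N. outer_prod (d i) (d i)) = transpose Dt ** Dt"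
    using assms(1) unfolding d_def stack3_stk .
  have QT: "?Q *v (?T *v d i) = E i" for i
  proof -
    have "?Q *v (?T *v d i) = ?Q *v (S *v xh i) + ?Q *v (R *v u i) - ?Q *v (P *v eh i)"
      unfolding d_def hblock_mv neg_mv by (simp add: algebra_simps mv_neg)
    also have "?Q *v (P *v eh i) = eh i" by (metis QP matrix_vector_mul_assoc matrix_vector_mul_lid)
    finally show ?thesis unfolding E_def by (simp add: matrix_vector_mul_assoc)
  qed
  have col: "(transpose ?C *v (?Q *v axis j 1)) \<bullet> (transpose ?C *v (?Q *v axis j 1))
      = (\<Sum>i=1..N. (E i $ j)^2)" for j
  proof -
    define y where "y = transpose ?T *v (?Q *v axis j 1)"
    have "transpose ?C *v (?Q *v axis j 1) = Dt *v y"
      unfolding y_def by (simp add: matrix_transpose_mul matrix_vector_mul_assoc matrix_mul_assoc)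
    then have "(transpose ?C *v (?Q *v axis j 1)) \<bullet> (transpose ?C *v (?Q *v axis j 1))
        = y \<bullet> ((transpose Dt ** Dt) *v y)"
      by (metis dot_mv matrix_vector_mul_assoc inner_commute)
    also have "\<dots> = (\<Sum>i=1..N. (d i \<bullet> y)^2)"
      unfolding D[symmetric] sum_mat_mv outer_mv
      by (simp add: inner_sum_right power2_eq_square inner_commute)
    also have "\<dots> = (\<Sum>i=1..N. (E i $ j)^2)"
    proof (rule sum.cong[OF refl])
      fix i
      have "d i \<bullet> y = (?T *v d i) \<bullet> (?Q *v axis j 1)"
        unfolding y_def by (metis dot_mv transpose_transpose)
      also have "\<dots> = (?Q *v (?T *v d i)) \<bullet> axis j 1"
        by (metis Qs dot_mv inner_commute)
      also have "\<dots> = E i $ j" unfolding QT by (simp add: inner_axis)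
      finally show "(d i \<bullet> y)^2 = (E i $ j)^2" by simp
    qed
    finally show ?thesis .
  qed
  have "(\<Sum>i=1..N. E i \<bullet> E i) = (\<Sum>j\<in>UNIV. \<Sum>i=1..N. (E i $ j)^2)"
    unfolding inner_vec_def power2_eq_square inner_real_def by (rule sum.swap)
  also have "\<dots> \<le> (\<Sum>j\<in>UNIV. axis j 1 \<bullet> (W *v axis j (1::real)))"
    by (rule sum_mono) (metis col key_ineq[OF pd psd])
  also have "\<dots> = trace W" by (simp add: diag_axis trace_def)
  finally have cost: "(\<Sum>i=1..N. E i \<bullet> E i) \<le> trace W" .
  show ?thesis using hur pd nd2 cost unfolding E_def Let_def by blast
qed

end
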